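(* Consider an MILP instance $\min\{\mathbf{c}\mathbf{x} \mid A\mathbf{x}=\mathbf{b},\ \mathbf{l}\le\mathbf{x}\le\mathbf{u},\ \mathbf{x}\in\mathbb{Z}^z\times\mathbb{Q}^q\}$ with $A=(A_{\mathbb{Z}}\ A_{\mathbb{Q}})$, $\mathbf{x}=(\mathbf{x}_{\mathbb{Z}},\mathbf{x}_{\mathbb{Q}})$, $\mathbf{c}=(\mathbf{c}_{\mathbb{Z}},\mathbf{c}_{\mathbb{Q}})$, $\mathbf{l}=(\mathbf{l}_{\mathbb{Z}},\mathbf{l}_{\mathbb{Q}})$, $\mathbf{u}=(\mathbf{u}_{\mathbb{Z}},\mathbf{u}_{\mathbb{Q}})$ split into integer and rational parts, which has an optimal solution, and let $M$ be its fractionality and $\tilde M := M!$. Consider the integralized instance $\min\{(\tilde M\mathbf{c}_{\mathbb{Z}},\mathbf{c}_{\mathbb{Q}})\mathbf{z} \mid (\tilde M A_{\mathbb{Z}}\ A_{\mathbb{Q}})\mathbf{z} = \tilde M\mathbf{b},\ (\mathbf{l}_{\mathbb{Z}},\tilde M\mathbf{l}_{\mathbb{Q}}) \le (\mathbf{z}_{\mathbb{Z}},\mathbf{z}_{\mathbb{Q}}) \le (\mathbf{u}_{\mathbb{Z}},\tilde M\mathbf{u}_{\mathbb{Q}}),\ \mathbf{z}\in\mathbb{Z}^{z+q}\}$. If $\mathbf{z}=(\mathbf{z}_{\mathbb{Z}},\mathbf{z}_{\mathbb{Q}})\in\mathbb{Z}^{z+q}$ is an optimal solution of the integralized instance, then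 $\mathbf{x}=(\mathbf{z}_{\mathbb{Z}},\frac{1}{\tilde M}\mathbf{z}_{\mathbb{Q}})$ is an optimal solution of the original MILP instance.
   Context: The fractionality of an MILP instance is the minimum, over all optimal solutions $\mathbf{x}$, of the largest denominator among the entries of $\mathbf{x}$ written in lowest terms. *)

theory Defs
  imports Complex_Main
begin

text \<open>Vectors are functions nat => rat, only the
  entries with index < n (resp. < m for b) are meaningful; the variables with index
  j < z are the integer ones, those with z <= j < n the rational ones.\<close>

definition milp_feasible ::
  "nat \<Rightarrow> nat \<Rightarrow> nat \<Rightarrow> (nat \<Rightarrow> nat \<Rightarrow> rat) \<Rightarrow> (nat \<Rightarrow> rat) \<Rightarrow> (nat \<Rightarrow> rat) \<Rightarrow> (nat \<Rightarrow> rat)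
    \<Rightarrow> (nat \<Rightarrow> rat) \<Rightarrow> bool" where
  "milp_feasible m n z A b l u x \<longleftrightarrow>
     (\<forall>i<m. (\<Sum>j<n. A i j * x j) = b i) \<and>
     (\<forall>j<n. l j \<le> x j \<and> x j \<le> u j) \<and>
     (\<forall>j<z. x j \<in> \<int>)"

definition milp_obj :: "nat \<Rightarrow> (nat \<Rightarrow> rat) \<Rightarrow> (nat \<Rightarrow> rat) \<Rightarrow> rat" where
  "milp_obj n c x = (\<Sum>j<n. c j * x j)"

definition milp_optimal ::
  "nat \<Rightarrow> nat \<Rightarrow> nat \<Rightarrow> (nat \<Rightarrow> rat) \<Rightarrow> (nat \<Rightarrow> nat \<Rightarrow> rat) \<Rightarrow> (nat \<Rightarrow> rat) \<Rightarrow> (nat \<Rightarrow> rat)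
    \<Rightarrow> (nat \<Rightarrow> rat) \<Rightarrow> (nat \<Rightarrow> rat) \<Rightarrow> bool" where
  "milp_optimal m n z c A b l u x \<longleftrightarrow>
     milp_feasible m n z A b l u x \<and>
     (\<forall>y. milp_feasible m n z A b l u y \<longrightarrow> milp_obj n c x \<le> milp_obj n c y)"

definition rat_denom :: "rat \<Rightarrow> nat" where
  "rat_denom r = nat (snd (quotient_of r))"

definition max_denom :: "nat \<Rightarrow> (nat \<Rightarrow> rat) \<Rightarrow> nat" where
  "max_denom n x = Max (insert 1 (rat_denom ` x ` {..<n}))"

definition fractionality ::
  "nat \<Rightarrow> nat \<Rightarrow> nat \<Rightarrow> (nat \<Rightarrow> rat) \<Rightarrow> (nat \<Rightarrow> nat \<Rightarrow> rat) \<Rightarrow> (nat \<Rightarrow> rat) \<Rightarrow> (nat \<Rightarrow> rat)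
    \<Rightarrow> (nat \<Rightarrow> rat) \<Rightarrow> nat" where
  "fractionality m n z c A b l u =
     (LEAST d. \<exists>x. milp_optimal m n z c A b l u x \<and> max_denom n x = d)"

end

theory Submission
  imports Defs
begin

lemma denom_mult_int:
  fixes r :: rat and d K :: nat
  assumes "rat_denom r \<le> d" "d \<le> K"
  shows "of_nat (fact K) * r \<in> \<int>"
proof -
  obtain a b where q: "quotient_of r = (a, b)" by (cases "quotient_of r")
  have bpos: "b > 0" using quotient_of_denom_pos[OF q] .
  have r: "r = of_int a / of_int b" using quotient_of_div[OF q] .
  have rd: "rat_denom r = nat b" unfolding rat_denom_def q by simp
  have "nat b dvd fact K"
    by (rule dvd_fact) (use bpos rd assms in auto)
  then obtain k where k: "fact K = nat b * k" by (auto elim: dvdE)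
  have "(of_nat (fact K) :: rat) = of_int b * of_nat k"
    using bpos by (simp add: k)
  hence "of_nat (fact K) * r = of_int (a * int k)"
    using bpos r by simp
  thus ?thesis by simp
qed

theorem lemma4:
  fixes m z q :: nat
    and A :: "nat \<Rightarrow> nat \<Rightarrow> rat"
    and b c l u :: "nat \<Rightarrow> rat"
    and zz :: "nat \<Rightarrow> rat"
  assumes has_opt: "\<exists>x. milp_optimal m (z + q) z c A b l u x"
    and zz_opt: "milp_optimal m (z + q) (z + q)
                   (\<lambda>j. if j < z then of_nat (fact (fractionality m (z + q) z c A b l u)) * c j else c j)
                   (\<lambda>i j. if j < z then of_nat (fact (fractionality m (z + q) z c A b l u)) * A i j else A i j)
                   (\<lambda>i. of_nat (fact (fractionality m (z + q) z c A b l u)) * b i)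
                   (\<lambda>j. if j < z then l j else of_nat (fact (fractionality m (z + q) z c A b l u)) * l j)
                   (\<lambda>j. if j < z then u j else of_nat (fact (fractionality m (z + q) z c A b l u)) * u j)
                   zz"
  shows "milp_optimal m (z + q) z c A b l u
           (\<lambda>j. if j < z then zz j else zz j / of_nat (fact (fractionality m (z + q) z c A b l u)))"
proof -
  define n where "n = z + q"
  define M where "M = fractionality m (z + q) z c A b l u"
  define K :: rat where "K = of_nat (fact M)"
  have Kpos: "K > 0" unfolding K_def by simp
  define c' where "c' = (\<lambda>j. if j < z then K * c j else c j)"
  define A' where "A' = (\<lambda>i j. if j < z then K * A i j else A i j)"
  define b' where "b' = (\<lambda>i. K * b i)"
  define l' where "l' = (\<lambda>j. if j < z then l j else K * l j)"
  define u' where "u' = (\<lambda>j. if j < z then u j else K * u j)"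
  have zo: "milp_optimal m n n c' A' b' l' u' zz"
    using zz_opt unfolding n_def c'_def A'_def b'_def l'_def u'_def K_def M_def .
  have "\<exists>x. milp_optimal m n z c A b l u x \<and> max_denom n x = M"
    unfolding M_def fractionality_def n_def
    by (rule LeastI_ex) (use has_opt in blast)
  then obtain xs where xs: "milp_optimal m n z c A b l u xs" and xsd: "max_denom n xs = M"
    by blast
  define phi where "phi = (\<lambda>j. if j < z then xs j else K * xs j)"
  have dle: "rat_denom (xs j) \<le> M" if "j < n" for j
    unfolding xsd[symmetric] max_denom_def using that by (intro Max_ge) auto
  have xsf: "milp_feasible m n z A b l u xs" using xs unfolding milp_optimal_def by blast
  have phif: "milp_feasible m n n A' b' l' u' phi"
    unfolding milp_feasible_def
  proof (intro conjI allI impI)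
    fix i assume "i < m"
    have "(\<Sum>j<n. A' i j * phi j) = K * (\<Sum>j<n. A i j * xs j)"
      unfolding sum_distrib_left by (rule sum.cong) (auto simp: A'_def phi_def)
    thus "(\<Sum>j<n. A' i j * phi j) = b' i"
      using xsf \<open>i < m\<close> unfolding milp_feasible_def b'_def by simp
  next
    fix j assume "j < n"
    thus "l' j \<le> phi j" "phi j \<le> u' j"
      using xsf Kpos unfolding milp_feasible_def l'_def u'_def phi_def by auto
    show "phi j \<in> \<int>"
    proof (cases "j < z")
      case True thus ?thesis using xsf unfolding milp_feasible_def phi_def by auto
    next
      case False
      thus ?thesis unfolding phi_def K_def
        using denom_mult_int[OF dle[OF \<open>j < n\<close>] order_refl] by simp
    qed
  qed
  have objphi: "milp_obj n c' phi = K * milp_obj n c xs"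
    unfolding milp_obj_def sum_distrib_left by (rule sum.cong) (auto simp: c'_def phi_def)
  define psi where "psi = (\<lambda>j. if j < z then zz j else zz j / K)"
  have zzf: "milp_feasible m n n A' b' l' u' zz" using zo unfolding milp_optimal_def by blast
  have zzle: "milp_obj n c' zz \<le> milp_obj n c' phi"
    using zo phif unfolding milp_optimal_def by blast
  have psif: "milp_feasible m n z A b l u psi"
    unfolding milp_feasible_def
  proof (intro conjI allI impI)
    fix i assume "i < m"
    have "(\<Sum>j<n. A i j * psi j) = (1 / K) * (\<Sum>j<n. A' i j * zz j)"
      unfolding sum_distrib_left by (rule sum.cong) (use Kpos in \<open>auto simp: A'_def psi_def\<close>)
    thus "(\<Sum>j<n. A i j * psi j) = b i"
      using zzf \<open>i < m\<close> Kpos unfolding milp_feasible_def b'_def by simp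
  next
    fix j assume "j < n"
    thus "l j \<le> psi j" "psi j \<le> u j"
      using zzf Kpos unfolding milp_feasible_def l'_def u'_def psi_def
      by (auto simp: pos_le_divide_eq pos_divide_le_eq mult.commute split: if_splits)
  next
    fix j assume "j < z"
    thus "psi j \<in> \<int>" using zzf unfolding milp_feasible_def psi_def n_def by auto
  qed
  have objpsi: "milp_obj n c psi = (1 / K) * milp_obj n c' zz"
    unfolding milp_obj_def sum_distrib_left by (rule sum.cong) (use Kpos in \<open>auto simp: c'_def psi_def\<close>)
  have "milp_obj n c psi \<le> milp_obj n c xs"
  proof -
    have "milp_obj n c psi * K \<le> milp_obj n c xs * K"
      using objpsi zzle objphi Kpos by (simp add: divide_simps mult.commute)
    thus ?thesis using Kpos by simp
  qed
  hence "milp_optimal m n z c A b l u psi"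
    using xs psif unfolding milp_optimal_def by fastforce
  thus ?thesis unfolding psi_def K_def M_def n_def .
qed

end
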